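(* Let $b=1/2$, let $\mathcal B$ be a Hamel basis of $\mathbb{R}$ over $\mathbb{Q}$ with $b\in\mathcal B$, and let $\pi:\mathbb{R}\to[0,1]$ be defined by $\pi(x)=\lambda^x_b-\lfloor\lambda^x_b\rfloor$ if $\lambda^x_b$ is not an odd integer, and $\pi(x)=1$ if $\lambda^x_b$ is an odd integer. Suppose $\pi_1,\pi_2:\mathbb{R}\to\mathbb{R}_+$ are minimal valid functions for $I_b$ with $\pi=\tfrac12\pi_1+\tfrac12\pi_2$. Then $\pi_i(x)=\pi_i(\lambda^x_b\, b)$ for every $x\in\mathbb{R}$ and $i=1,2$.
   Context: For $b\in\mathbb{R}\setminus\mathbb{Z}$, $I_b$ is the set of finite-support functions $y:\mathbb{R}\to\mathbb{Z}_+$ (i.e. $y(x)=0$ for all but finitely many $x$) such that $\sum_{x\in\mathbb{R}} y(x)\,x\equiv b \pmod 1$. A function $\pi:\mathbb{R}\to\mathbb{R}_+$ is a (nonnegative) valid function for $I_b$ if $\sum_{x\in\mathbb{R}}\pi(x)y(x)\ge 1$ for every $y\in I_b$. A valid function $\pi:\mathbb{R}\to\mathbb{R}_+$ is minimal if there is no valid function $\pi':\mathbb{R}\to\mathbb{R}_+$ with $\pi'\ne\pi$ and $\pi'\le\pi$ pointwise; equivalently (Gomory–Johnson), $\pi\ge0$ is subadditive ($\pi(x)+\pi(y)\ge\pi(x+y)$ for all $x,y$), symmetric ($\pi(x)+\pi(b-x)=1$ for all $x$) and $\pi(z)=0$ for all $z\in\mathbb{Z}$. A Hamel basis is a basis of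 $\mathbb{R}$ as a vector space over $\mathbb{Q}$; for $x\in\mathbb{R}$, $\lambda^x_b\in\mathbb{Q}$ denotes the coefficient of the basis element $b$ in the unique expression of $x$ as a finite rational linear combination of elements of $\mathcal B$. *)

theory Defs
  imports Complex_Main
begin

definition qscale :: "rat \<Rightarrow> real \<Rightarrow> real" where
  "qscale q x = real_of_rat q * x"

definition hamel_basis :: "real set \<Rightarrow> bool" where
  "hamel_basis B \<longleftrightarrow> \<not> module.dependent qscale B \<and> module.span qscale B = UNIV"

definition hamel_coeff :: "real set \<Rightarrow> real \<Rightarrow> real \<Rightarrow> rat" where
  "hamel_coeff B x b = module.representation qscale B x b"

definition in_I :: "real \<Rightarrow> (real \<Rightarrow> nat) \<Rightarrow> bool" where
  "in_I b y \<longleftrightarrow> finite {x. y x \<noteq> 0} \<and>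
     (\<Sum>x\<in>{x. y x \<noteq> 0}. real (y x) * x) - b \<in> \<int>"

definition valid_fn :: "real \<Rightarrow> (real \<Rightarrow> real) \<Rightarrow> bool" where
  "valid_fn b \<pi> \<longleftrightarrow> (\<forall>x. \<pi> x \<ge> 0) \<and>
     (\<forall>y. in_I b y \<longrightarrow> (\<Sum>x\<in>{x. y x \<noteq> 0}. \<pi> x * real (y x)) \<ge> 1)"

definition minimal_valid_fn :: "real \<Rightarrow> (real \<Rightarrow> real) \<Rightarrow> bool" where
  "minimal_valid_fn b \<pi> \<longleftrightarrow> valid_fn b \<pi> \<and>
     \<not> (\<exists>\<pi>'. valid_fn b \<pi>' \<and> \<pi>' \<noteq> \<pi> \<and> (\<forall>x. \<pi>' x \<le> \<pi> x))"

end

theory Submission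
  imports Defs
begin

lemma qmod: "module qscale"
  by unfold_locales (auto simp: qscale_def algebra_simps of_rat_add of_rat_mult)

lemma coeff_kill:
  assumes hB: "hamel_basis B" and bB: "b \<in> B"
  shows "hamel_coeff B (x - real_of_rat (hamel_coeff B x b) * b) b = 0"
    "hamel_coeff B (- (x - real_of_rat (hamel_coeff B x b) * b)) b = 0"
proof -
  interpret module qscale by (rule qmod)
  have ind: "independent B" and sp: "\<And>v. v \<in> span B" using hB by (auto simp: hamel_basis_def)
  have w: "real_of_rat (hamel_coeff B x b) * b = qscale (hamel_coeff B x b) b" by (simp add: qscale_def)
  have rb: "representation B (qscale (hamel_coeff B x b) b) b = hamel_coeff B x b"
    using representation_scale[OF ind sp, of "hamel_coeff B x b" b] representation_basis[OF ind bB]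
    by simp
  show 1: "hamel_coeff B (x - real_of_rat (hamel_coeff B x b) * b) b = 0"
    unfolding w
    using representation_diff[OF ind sp sp, of x "qscale (hamel_coeff B x b) b"] rb
    by (simp add: hamel_coeff_def)
  show "hamel_coeff B (- (x - real_of_rat (hamel_coeff B x b) * b)) b = 0"
    using 1 representation_neg[OF ind sp, of "x - real_of_rat (hamel_coeff B x b) * b"]
    by (simp only: hamel_coeff_def)
qed

lemma sum_supp:
  assumes "finite S" "{x. y x \<noteq> 0} \<subseteq> S"
  shows "(\<Sum>x\<in>{x. (y::real\<Rightarrow>nat) x \<noteq> 0}. f x * real (y x)) = (\<Sum>x\<in>S. f x * real (y x))"
  by (rule sum.mono_neutral_left) (use assms in auto)

lemma sum_supp2:
  assumes "finite S" "{x. y x \<noteq> 0} \<subseteq> S"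
  shows "(\<Sum>x\<in>{x. (y::real\<Rightarrow>nat) x \<noteq> 0}. real (y x) * f x) = (\<Sum>x\<in>S. real (y x) * f x)"
  by (rule sum.mono_neutral_left) (use assms in auto)

lemma minimal_subadd:
  assumes m: "minimal_valid_fn b \<pi>"
  shows "\<pi> (a + c) \<le> \<pi> a + \<pi> c"
proof (rule ccontr)
  assume lt: "\<not> \<pi> (a + c) \<le> \<pi> a + \<pi> c"
  define p where "p = a + c"
  have v: "valid_fn b \<pi>" using m by (simp add: minimal_valid_fn_def)
  have nn: "\<And>x. \<pi> x \<ge> 0" using v by (simp add: valid_fn_def)
  have ap: "a \<noteq> p" using lt nn[of c] unfolding p_def by auto
  have cp: "c \<noteq> p" using lt nn[of a] unfolding p_def by auto
  define \<pi>' where "\<pi>' = \<pi>(p := \<pi> a + \<pi> c)"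
  have le: "\<forall>x. \<pi>' x \<le> \<pi> x" using lt by (auto simp: \<pi>'_def p_def)
  have ne: "\<pi>' \<noteq> \<pi>" using lt by (auto simp: \<pi>'_def p_def fun_eq_iff)
  have "valid_fn b \<pi>'"
    unfolding valid_fn_def
  proof (intro conjI allI impI)
    fix x show "\<pi>' x \<ge> 0" using nn by (simp add: \<pi>'_def add_nonneg_nonneg)
  next
    fix y assume yI: "in_I b y"
    define S where "S = {x. y x \<noteq> 0} \<union> {a, c, p}"
    have fS: "finite S" using yI by (simp add: S_def in_I_def)
    define y' where "y' = (\<lambda>x. (if x = p then 0 else y x) + (if x = a then y p else 0)
                                 + (if x = c then y p else 0))"
    have ry': "\<And>x. real (y' x) = real (y x) - (if x = p then real (y p) else 0)
       + (if x = a then real (y p) else 0) + (if x = c then real (y p) else 0)"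
      using ap cp by (auto simp: y'_def)
    have sy': "{x. y' x \<noteq> 0} \<subseteq> S" by (auto simp: y'_def S_def)
    have sy: "{x. y x \<noteq> 0} \<subseteq> S" by (auto simp: S_def)
    have pS: "p \<in> S" "a \<in> S" "c \<in> S" by (auto simp: S_def)
    have gen: "(\<Sum>x\<in>S. real (y' x) * f x) = (\<Sum>x\<in>S. real (y x) * f x)
        - real (y p) * f p + real (y p) * f a + real (y p) * f c" for f :: "real \<Rightarrow> real"
    proof -
      have "(\<Sum>x\<in>S. real (y' x) * f x) = (\<Sum>x\<in>S. real (y x) * f x
         - (if x = p then real (y p) * f p else 0) + (if x = a then real (y p) * f a else 0)
         + (if x = c then real (y p) * f c else 0))"
        by (rule sum.cong) (auto simp: ry' algebra_simps)
      then show ?thesis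
        using fS pS by (simp add: sum.distrib sum_subtractf)
    qed
    have "in_I b y'"
    proof -
      have "(\<Sum>x\<in>{x. y' x \<noteq> 0}. real (y' x) * x) = (\<Sum>x\<in>S. real (y' x) * x)"
        by (rule sum_supp2[OF fS sy'])
      also have "\<dots> = (\<Sum>x\<in>S. real (y x) * x)" using gen[of "\<lambda>x. x"] by (simp add: p_def algebra_simps)
      also have "\<dots> = (\<Sum>x\<in>{x. y x \<noteq> 0}. real (y x) * x)" by (rule sum_supp2[OF fS sy, symmetric])
      finally show ?thesis using yI fS sy' finite_subset by (auto simp: in_I_def)
    qed
    then have "1 \<le> (\<Sum>x\<in>{x. y' x \<noteq> 0}. \<pi> x * real (y' x))" using v by (simp add: valid_fn_def)
    also have "\<dots> = (\<Sum>x\<in>S. \<pi> x * real (y' x))" by (rule sum_supp[OF fS sy'])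
    also have "\<dots> = (\<Sum>x\<in>S. \<pi>' x * real (y x))"
    proof -
      have "(\<Sum>x\<in>S. \<pi> x * real (y' x)) = (\<Sum>x\<in>S. real (y x) * \<pi> x)
        - real (y p) * \<pi> p + real (y p) * \<pi> a + real (y p) * \<pi> c"
        using gen[of \<pi>] by (simp add: mult.commute)
      moreover have "(\<Sum>x\<in>S. \<pi>' x * real (y x)) = (\<Sum>x\<in>S. real (y x) * \<pi> x
        - (if x = p then real (y p) * \<pi> p else 0) + (if x = p then real (y p) * (\<pi> a + \<pi> c) else 0))"
        by (rule sum.cong) (auto simp: \<pi>'_def algebra_simps)
      ultimately show ?thesis using fS pS by (simp add: sum.distrib sum_subtractf algebra_simps)
    qed
    also have "\<dots> = (\<Sum>x\<in>{x. y x \<noteq> 0}. \<pi>' x * real (y x))" by (rule sum_supp[OF fS sy, symmetric])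
    finally show "(\<Sum>x\<in>{x. y x \<noteq> 0}. \<pi>' x * real (y x)) \<ge> 1" .
  qed
  then show False using m le ne by (auto simp: minimal_valid_fn_def)
qed

theorem mainTheorem2:
  fixes B :: "real set" and \<pi> \<pi>1 \<pi>2 :: "real \<Rightarrow> real" and b :: real
  assumes b_def: "b = 1/2"
    and hB: "hamel_basis B" and bB: "b \<in> B"
    and \<pi>_def: "\<And>x. \<pi> x = (if \<exists>k::int. odd k \<and> hamel_coeff B x b = of_int k then 1
                   else real_of_rat (hamel_coeff B x b - of_int \<lfloor>hamel_coeff B x b\<rfloor>))"
    and m1: "minimal_valid_fn b \<pi>1" and m2: "minimal_valid_fn b \<pi>2"
    and comb: "\<And>x. \<pi> x = \<pi>1 x / 2 + \<pi>2 x / 2"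
  shows "\<forall>x. \<pi>1 x = \<pi>1 (real_of_rat (hamel_coeff B x b) * b) \<and>
             \<pi>2 x = \<pi>2 (real_of_rat (hamel_coeff B x b) * b)"
proof
  fix x
  have nn1: "\<And>x. \<pi>1 x \<ge> 0" using m1 by (simp add: minimal_valid_fn_def valid_fn_def)
  have nn2: "\<And>x. \<pi>2 x \<ge> 0" using m2 by (simp add: minimal_valid_fn_def valid_fn_def)
  have zero: "\<pi>1 z = 0 \<and> \<pi>2 z = 0" if "hamel_coeff B z b = 0" for z
  proof -
    have "\<not> (\<exists>k::int. odd k \<and> (0::rat) = of_int k)" by auto
    then have "\<pi> z = 0" using \<pi>_def[of z] that by simp
    then show ?thesis using comb[of z] nn1[of z] nn2[of z] by linarith
  qed
  define w where "w = real_of_rat (hamel_coeff B x b) * b"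
  define z where "z = x - w"
  have z0: "\<pi>1 z = 0 \<and> \<pi>2 z = 0" "\<pi>1 (-z) = 0 \<and> \<pi>2 (-z) = 0"
    using zero coeff_kill[OF hB bB, of x] unfolding z_def w_def by auto
  have "\<pi>1 (w + z) \<le> \<pi>1 w + \<pi>1 z" "\<pi>1 (x + -z) \<le> \<pi>1 x + \<pi>1 (-z)"
       "\<pi>2 (w + z) \<le> \<pi>2 w + \<pi>2 z" "\<pi>2 (x + -z) \<le> \<pi>2 x + \<pi>2 (-z)"
    using minimal_subadd[OF m1, of w z] minimal_subadd[OF m2, of w z]
      minimal_subadd[OF m1, of x "-z"] minimal_subadd[OF m2, of x "-z"] by auto
  moreover have "w + z = x" "x + -z = w" by (auto simp: z_def)
  ultimately show "\<pi>1 x = \<pi>1 (real_of_rat (hamel_coeff B x b) * b) \<and>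
             \<pi>2 x = \<pi>2 (real_of_rat (hamel_coeff B x b) * b)"
    using z0 unfolding w_def[symmetric] by auto
qed

end
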